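(* For every density operator $\rho$ on $\mathbb{C}^d$, $C_{\mathcal{F}}(\rho)\le N_c(\rho)/d$.
   Context: Fix the computational basis $\{|i\rangle\}_{i=0}^{d-1}$ of $\mathbb{C}^d$ as the incoherent basis. A maximally coherent state is a pure state $\frac1{\sqrt d}\sum_{i}e^{\mathrm{i}\theta_i}|i\rangle$; the quantum coherence fraction is $C_{\mathcal{F}}(\rho)=\max_{|\phi\rangle\text{ maximally coherent}}\langle\phi|\rho|\phi\rangle$. The coherence rank $R_c(|\psi\rangle)$ of a pure state is the number of nonzero coefficients of $|\psi\rangle$ in the incoherent basis. The coherence number is $N_c(\rho)=\min_{\{p_i,|\psi_i\rangle\}}\max_i R_c(|\psi_i\rangle)$, the minimum over all decompositions $\rho=\sum_ip_i|\psi_i\rangle\langle\psi_i|$ into pure states with $p_i>0$. *)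

theory Defs
  imports "HOL-Analysis.Analysis"
begin

text \<open>Operators on C^d are represented as matrices indexed by a finite type 'n,
  with d = CARD('n); the incoherent basis is the standard basis indexed by 'n.
  Vectors are functions 'n => complex.\<close>

definition density_op :: "('n::finite \<Rightarrow> 'n \<Rightarrow> complex) \<Rightarrow> bool" where
  "density_op \<rho> \<longleftrightarrow>
     (\<forall>i j. \<rho> j i = cnj (\<rho> i j)) \<and>
     (\<forall>v::'n \<Rightarrow> complex. 0 \<le> Re (\<Sum>i\<in>UNIV. \<Sum>j\<in>UNIV. cnj (v i) * \<rho> i j * v j)) \<and>
     (\<Sum>i\<in>UNIV. \<rho> i i) = 1"

definition coherence_rank :: "('n::finite \<Rightarrow> complex) \<Rightarrow> nat" where
  "coherence_rank \<psi> = card {i. \<psi> i \<noteq> 0}"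

definition pure_decomposition ::
  "('n::finite \<Rightarrow> 'n \<Rightarrow> complex) \<Rightarrow> (real \<times> ('n \<Rightarrow> complex)) list \<Rightarrow> bool" where
  "pure_decomposition \<rho> E \<longleftrightarrow>
     (\<forall>(p, \<psi>) \<in> set E. p > 0 \<and> (\<Sum>i\<in>UNIV. (cmod (\<psi> i))\<^sup>2) = 1) \<and>
     \<rho> = (\<lambda>i j. \<Sum>(p, \<psi>) \<leftarrow> E. complex_of_real p * \<psi> i * cnj (\<psi> j))"

definition coherence_number :: "('n::finite \<Rightarrow> 'n \<Rightarrow> complex) \<Rightarrow> nat" where
  "coherence_number \<rho> =
     Inf {Max (insert 0 ((\<lambda>(p, \<psi>). coherence_rank \<psi>) ` set E)) | E. pure_decomposition \<rho> E}"

definition max_coherent_state :: "('n::finite \<Rightarrow> real) \<Rightarrow> ('n \<Rightarrow> complex)" where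
  "max_coherent_state \<theta> = (\<lambda>i. exp (\<i> * complex_of_real (\<theta> i)) / complex_of_real (sqrt (real CARD('n))))"

definition coherence_fraction :: "('n::finite \<Rightarrow> 'n \<Rightarrow> complex) \<Rightarrow> real" where
  "coherence_fraction \<rho> =
     (SUP \<theta> :: 'n \<Rightarrow> real. Re (\<Sum>i\<in>UNIV. \<Sum>j\<in>UNIV. cnj (max_coherent_state \<theta> i) * \<rho> i j * max_coherent_state \<theta> j))"

end

theory Submission
  imports Defs
begin

definition bf :: "('n::finite \<Rightarrow> 'n \<Rightarrow> complex) \<Rightarrow> ('n \<Rightarrow> complex) \<Rightarrow> ('n \<Rightarrow> complex) \<Rightarrow> complex" where
  "bf A x y = (\<Sum>i\<in>UNIV. \<Sum>j\<in>UNIV. cnj (x i) * A i j * y j)"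

definition dlt :: "'n \<Rightarrow> 'n \<Rightarrow> complex" where
  "dlt k = (\<lambda>i. if i = k then 1 else 0)"

lemma bf_add_left: "bf A (\<lambda>i. x i + y i) z = bf A x z + bf A y z"
  unfolding bf_def by (simp add: algebra_simps sum.distrib)

lemma bf_add_right: "bf A x (\<lambda>i. y i + z i) = bf A x y + bf A x z"
  unfolding bf_def by (simp add: algebra_simps sum.distrib)

lemma bf_scale_left: "bf A (\<lambda>i. c * x i) y = cnj c * bf A x y"
  unfolding bf_def by (simp add: algebra_simps sum_distrib_left)

lemma bf_scale_right: "bf A x (\<lambda>i. c * y i) = c * bf A x y"
  unfolding bf_def by (simp add: algebra_simps sum_distrib_left)

lemma bf_dlt_left: "bf A (dlt k) y = (\<Sum>j\<in>UNIV. A k j * y j)"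
proof -
  have "\<And>i. (\<Sum>j\<in>UNIV. cnj (dlt k i) * A i j * y j) = (if i = k then (\<Sum>j\<in>UNIV. A k j * y j) else 0)"
    by (auto simp: dlt_def)
  then show ?thesis unfolding bf_def by simp
qed

lemma bf_dlt_right: "bf A x (dlt k) = (\<Sum>i\<in>UNIV. cnj (x i) * A i k)"
proof -
  have "\<And>i. (\<Sum>j\<in>UNIV. cnj (x i) * A i j * dlt k j) = cnj (x i) * A i k"
  proof -
    fix i
    have "(\<Sum>j\<in>UNIV. cnj (x i) * A i j * dlt k j) = (\<Sum>j\<in>UNIV. if j = k then cnj (x i) * A i k else 0)"
      by (rule sum.cong) (auto simp: dlt_def)
    then show "(\<Sum>j\<in>UNIV. cnj (x i) * A i j * dlt k j) = cnj (x i) * A i k" by simp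
  qed
  then show ?thesis unfolding bf_def by simp
qed

lemma bf_dlt_dlt: "bf A (dlt k) (dlt k) = A k k"
proof -
  have "(\<Sum>j\<in>UNIV. A k j * dlt k j) = (\<Sum>j\<in>UNIV. if j = k then A k k else 0)"
    by (rule sum.cong) (auto simp: dlt_def)
  then show ?thesis unfolding bf_dlt_left by simp
qed

lemma cs:
  fixes A :: "'n::finite \<Rightarrow> 'n \<Rightarrow> complex"
  assumes herm: "\<forall>i j. A j i = cnj (A i j)" and pos: "\<forall>v. 0 \<le> Re (bf A v v)"
  shows "(cmod (\<Sum>j\<in>UNIV. A k j * v j))\<^sup>2 \<le> Re (A k k) * Re (bf A v v)"
proof -
  define b where "b = (\<Sum>j\<in>UNIV. A k j * v j)"
  define q where "q = Re (bf A v v)"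
  define a where "a = Re (A k k)"
  have q0: "q \<ge> 0" using pos q_def by auto
  have a0: "a \<ge> 0" using pos[rule_format, of "dlt k"] unfolding a_def
    by (simp add: bf_dlt_dlt)
  have Akk: "A k k = of_real a"
    using herm[rule_format, of k k] unfolding a_def by (metis Reals_cnj_iff complex_is_Real_iff of_real_Re)
  have r: "bf A v (dlt k) = cnj b"
    unfolding b_def bf_dlt_right cnj_sum
    by (rule sum.cong) (simp_all add: herm[rule_format, of _ k] mult.commute)
  have expand: "bf A (\<lambda>i. v i + t * dlt k i) (\<lambda>i. v i + t * dlt k i)
      = bf A v v + cnj t * b + t * cnj b + cnj t * t * A k k" for t
    unfolding bf_add_left bf_add_right bf_scale_left bf_scale_right bf_dlt_left[symmetric] r b_def[symmetric]
      bf_dlt_dlt by (simp add: algebra_simps bf_dlt_left b_def)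
  have ge: "0 \<le> q + 2 * Re (cnj t * b) + (cmod t)\<^sup>2 * a" for t
  proof -
    have "0 \<le> Re (bf A (\<lambda>i. v i + t * dlt k i) (\<lambda>i. v i + t * dlt k i))" using pos by blast
    also have "\<dots> = q + Re (cnj t * b) + Re (t * cnj b) + Re (cnj t * t * A k k)"
      unfolding expand q_def by simp
    also have "Re (t * cnj b) = Re (cnj t * b)"
      by simp
    also have "cnj t * t * A k k = of_real ((cmod t)\<^sup>2 * a)"
      using complex_norm_square[of t] Akk by (simp add: mult.commute)
    finally show ?thesis by (simp add: algebra_simps)
  qed
  have nb: "Re (cnj b * b) = (cmod b)\<^sup>2"
    using complex_norm_square[of b] by (metis Re_complex_of_real mult.commute)
  show ?thesis
  proof (cases "a > 0")
    case True
    have "0 \<le> q + 2 * Re (cnj (- b / of_real a) * b) + (cmod (- b / of_real a))\<^sup>2 * a"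
      by (rule ge)
    also have "Re (cnj (- b / of_real a) * b) = - (cmod b)\<^sup>2 / a"
      using nb by (simp add: divide_simps)
    also have "(cmod (- b / of_real a))\<^sup>2 = (cmod b)\<^sup>2 / a\<^sup>2"
      by (simp add: norm_divide power_divide)
    finally have "0 \<le> q - (cmod b)\<^sup>2 / a" using True by (simp add: power2_eq_square field_simps)
    then show ?thesis using True unfolding b_def[symmetric] q_def[symmetric] a_def[symmetric]
      by (simp add: field_simps)
  next
    case False
    then have a00: "a = 0" using a0 by simp
    have "b = 0"
    proof (rule ccontr)
      assume "b \<noteq> 0"
      then have bp: "(cmod b)\<^sup>2 > 0" by simp
      define s where "s = (q + 1) / (2 * (cmod b)\<^sup>2)"
      have "0 \<le> q + 2 * Re (cnj (- of_real s * b) * b) + (cmod (- of_real s * b))\<^sup>2 * a"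
        by (rule ge)
      also have "Re (cnj (- of_real s * b) * b) = - s * (cmod b)\<^sup>2"
        using nb[symmetric] by (simp add: algebra_simps)
      finally have "0 \<le> q - 2 * s * (cmod b)\<^sup>2" using a00 by simp
      also have "2 * s * (cmod b)\<^sup>2 = q + 1" unfolding s_def using bp by simp
      finally show False by simp
    qed
    then show ?thesis using a00 q0 unfolding b_def[symmetric] q_def[symmetric] a_def[symmetric] by simp
  qed
qed


lemma sum_dlt: fixes f :: "'n::finite \<Rightarrow> complex" shows "(\<Sum>j\<in>UNIV. f j * dlt i j) = (f i :: complex)"
proof -
  have "(\<Sum>j\<in>UNIV. f j * dlt i j) = (\<Sum>j\<in>UNIV. if i = j then f i else 0)"
    by (rule sum.cong) (auto simp: dlt_def)
  then show ?thesis by simp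
qed

lemma diag_real:
  fixes A :: "'n::finite \<Rightarrow> 'n \<Rightarrow> complex"
  assumes herm: "\<forall>i j. A j i = cnj (A i j)" and pos: "\<forall>v. 0 \<le> Re (bf A v v)"
  shows "A k k = of_real (Re (A k k))" "Re (A k k) \<ge> 0"
  using herm[rule_format, of k k] apply (metis Reals_cnj_iff complex_is_Real_iff of_real_Re)
  using pos[rule_format, of "dlt k"] by (simp add: bf_dlt_dlt)

lemma peel:
  fixes A :: "'n::finite \<Rightarrow> 'n \<Rightarrow> complex"
  assumes herm: "\<forall>i j. A j i = cnj (A i j)" and pos: "\<forall>v. 0 \<le> Re (bf A v v)"
    and nz: "A k k \<noteq> 0"
  defines "a \<equiv> Re (A k k)"
  defines "u \<equiv> (\<lambda>j. A j k / of_real (sqrt a))"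
  defines "B \<equiv> (\<lambda>i j. A i j - u i * cnj (u j))"
  shows "(\<forall>i j. B j i = cnj (B i j)) \<and> (\<forall>v. 0 \<le> Re (bf B v v))
     \<and> {i. B i i \<noteq> 0} \<subseteq> {i. A i i \<noteq> 0} - {k} \<and> A = (\<lambda>i j. B i j + u i * cnj (u j))"
proof -
  have Akk: "A k k = of_real a" and a0: "a \<ge> 0" using diag_real[OF herm pos] a_def by auto
  have ap: "a > 0" using Akk a0 nz by (cases "a = 0") auto
  have sa: "sqrt a > 0" using ap by simp
  have cu: "cnj (u j) = A k j / of_real (sqrt a)" for j
    unfolding u_def by (simp add: herm[rule_format, of k j])
  have h1: "\<forall>i j. B j i = cnj (B i j)"
    unfolding B_def by (metis herm complex_cnj_diff complex_cnj_mult complex_cnj_cnj mult.commute)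
  have h2: "0 \<le> Re (bf B v v)" for v
  proof -
    define b where "b = (\<Sum>j\<in>UNIV. A k j * v j)"
    define c where "c = (\<Sum>j\<in>UNIV. cnj (u j) * v j)"
    have cb: "c = b / of_real (sqrt a)"
      unfolding c_def b_def cu by (simp add: sum_divide_distrib)
    have "bf B v v = bf A v v - (\<Sum>i\<in>UNIV. \<Sum>j\<in>UNIV. (cnj (v i) * u i) * (cnj (u j) * v j))"
      unfolding bf_def B_def by (simp add: algebra_simps sum_subtractf)
    also have "(\<Sum>i\<in>UNIV. \<Sum>j\<in>UNIV. (cnj (v i) * u i) * (cnj (u j) * v j))
        = (\<Sum>i\<in>UNIV. cnj (v i) * u i) * c"
      unfolding c_def by (simp add: sum_product)
    also have "(\<Sum>i\<in>UNIV. cnj (v i) * u i) = cnj c"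
      unfolding c_def cnj_sum by (simp add: mult.commute)
    finally have "Re (bf B v v) = Re (bf A v v) - (cmod c)\<^sup>2"
      using cmod_power2[of c] by (simp add: power2_eq_square)
    also have "(cmod c)\<^sup>2 = (cmod b)\<^sup>2 / a"
      unfolding cb using ap by (simp add: norm_divide power_divide)
    finally have eq: "Re (bf B v v) = Re (bf A v v) - (cmod b)\<^sup>2 / a" .
    have "(cmod b)\<^sup>2 \<le> a * Re (bf A v v)"
      unfolding b_def a_def by (rule cs[OF herm pos])
    then have "(cmod b)\<^sup>2 / a \<le> Re (bf A v v)" using ap by (simp add: field_simps)
    then show ?thesis using eq by simp
  qed
  have h3: "{i. B i i \<noteq> 0} \<subseteq> {i. A i i \<noteq> 0} - {k}"
  proof
    fix i assume "i \<in> {i. B i i \<noteq> 0}"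
    then have Bi: "B i i \<noteq> 0" by simp
    have "i \<noteq> k"
    proof
      assume "i = k"
      have "u k * cnj (u k) = A k k"
      proof -
        have e: "(of_real a / of_real (sqrt a) :: complex) = of_real (sqrt a)"
          using a0 by (metis of_real_divide real_div_sqrt)
        have "u k * cnj (u k) = of_real (sqrt a) * of_real (sqrt a)"
          unfolding cu unfolding u_def Akk e by simp
        also have "\<dots> = of_real a" using a0 by (metis of_real_mult real_sqrt_mult_self abs_of_nonneg)
        finally show ?thesis using Akk by simp
      qed
      then show False using Bi \<open>i = k\<close> unfolding B_def by simp
    qed
    moreover have "A i i \<noteq> 0"
    proof
      assume Ai: "A i i = 0"
      have "(cmod (\<Sum>j\<in>UNIV. A k j * dlt i j))\<^sup>2 \<le> Re (A k k) * Re (bf A (dlt i) (dlt i))"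
        by (rule cs[OF herm pos])
      also have "(\<Sum>j\<in>UNIV. A k j * dlt i j) = A k i"
        by (rule sum_dlt)
      finally have "A k i = 0" using Ai by (simp add: bf_dlt_dlt)
      then have "A i k = 0" using herm by (metis complex_cnj_zero)
      then have "u i = 0" unfolding u_def by simp
      then show False using Bi Ai unfolding B_def by simp
    qed
    ultimately show "i \<in> {i. A i i \<noteq> 0} - {k}" by simp
  qed
  have h4: "A = (\<lambda>i j. B i j + u i * cnj (u j))" unfolding B_def by simp
  show ?thesis using h1 h2 h3 h4 by blast
qed


lemma exists_rank1:
  fixes A :: "'n::finite \<Rightarrow> 'n \<Rightarrow> complex"
  assumes "\<forall>i j. A j i = cnj (A i j)" and "\<forall>v. 0 \<le> Re (bf A v v)"
  shows "\<exists>cs. A = (\<lambda>i j. \<Sum>c\<leftarrow>cs. c i * cnj (c j))"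
  using assms
proof (induction "card {i. A i i \<noteq> 0}" arbitrary: A rule: less_induct)
  case less
  note herm = less.prems(1) and pos = less.prems(2)
  show ?case
  proof (cases "\<exists>k. A k k \<noteq> 0")
    case False
    have "A k i = 0" for k i
    proof -
      have "(cmod (\<Sum>j\<in>UNIV. A k j * dlt i j))\<^sup>2 \<le> Re (A k k) * Re (bf A (dlt i) (dlt i))"
        by (rule cs[OF herm pos])
      then show ?thesis using False by (simp add: sum_dlt bf_dlt_dlt)
    qed
    then have "A = (\<lambda>i j. \<Sum>c\<leftarrow>[]. c i * cnj (c j))" by auto
    then show ?thesis by blast
  next
    case True
    then obtain k where k: "A k k \<noteq> 0" by blast
    define a where "a = Re (A k k)"
    define u where "u = (\<lambda>j. A j k / of_real (sqrt a))"
    define B where "B = (\<lambda>i j. A i j - u i * cnj (u j))"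
    have P: "(\<forall>i j. B j i = cnj (B i j)) \<and> (\<forall>v. 0 \<le> Re (bf B v v))
     \<and> {i. B i i \<noteq> 0} \<subseteq> {i. A i i \<noteq> 0} - {k} \<and> A = (\<lambda>i j. B i j + u i * cnj (u j))"
      unfolding B_def u_def a_def by (rule peel[OF herm pos k])
    have "card {i. B i i \<noteq> 0} < card {i. A i i \<noteq> 0}"
    proof (rule psubset_card_mono)
      show "finite {i. A i i \<noteq> 0}" by simp
      show "{i. B i i \<noteq> 0} \<subset> {i. A i i \<noteq> 0}" using P k by blast
    qed
    then obtain cs where cs: "B = (\<lambda>i j. \<Sum>c\<leftarrow>cs. c i * cnj (c j))"
      using less.hyps P by blast
    have "A = (\<lambda>i j. \<Sum>c\<leftarrow>u # cs. c i * cnj (c j))"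
    proof -
      from P have h4: "A = (\<lambda>i j. B i j + u i * cnj (u j))" by blast
      show ?thesis unfolding h4 cs by (simp add: add.commute)
    qed
    then show ?thesis by blast
  qed
qed

definition n2 :: "('n::finite \<Rightarrow> complex) \<Rightarrow> real" where
  "n2 c = (\<Sum>i\<in>UNIV. (cmod (c i))\<^sup>2)"

lemma n2_zero: "n2 c = 0 \<Longrightarrow> c i = 0"
  unfolding n2_def by (subst (asm) sum_nonneg_eq_0_iff) auto

lemma exists_decomp:
  fixes \<rho> :: "'n::finite \<Rightarrow> 'n \<Rightarrow> complex"
  assumes "\<forall>i j. \<rho> j i = cnj (\<rho> i j)" and "\<forall>v. 0 \<le> Re (bf \<rho> v v)"
  shows "\<exists>E. pure_decomposition \<rho> E"
proof -
  obtain cs where cs: "\<rho> = (\<lambda>i j. \<Sum>c\<leftarrow>cs. c i * cnj (c j))"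
    using exists_rank1[OF assms] by blast
  define f where "f = (\<lambda>c::'n \<Rightarrow> complex. (n2 c, \<lambda>i. c i / of_real (sqrt (n2 c))))"
  define E where "E = map f (filter (\<lambda>c. n2 c \<noteq> 0) cs)"
  have n0: "n2 c \<ge> 0" for c unfolding n2_def by (simp add: sum_nonneg)
  have A: "\<forall>(p, \<psi>) \<in> set E. p > 0 \<and> (\<Sum>i\<in>UNIV. (cmod (\<psi> i))\<^sup>2) = 1"
  proof -
   have A1: "n2 c > 0 \<and> (\<Sum>i\<in>UNIV. (cmod (c i / of_real (sqrt (n2 c))))\<^sup>2) = 1" if "n2 c \<noteq> 0"
     for c :: "'n \<Rightarrow> complex"
   proof -
    have p: "n2 c > 0" using n0[of c] that by simp
    have "(\<Sum>i\<in>UNIV. (cmod (c i / of_real (sqrt (n2 c))))\<^sup>2) = (\<Sum>i\<in>UNIV. (cmod (c i))\<^sup>2 / n2 c)"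
      using p by (simp add: norm_divide power_divide)
    also have "\<dots> = 1" using p by (simp add: sum_divide_distrib[symmetric] n2_def[symmetric])
    finally show ?thesis using p by simp
   qed
   then show ?thesis by (auto simp: E_def f_def)
  qed
  have trm: "(case f c of (p, \<psi>) \<Rightarrow> complex_of_real p * \<psi> i * cnj (\<psi> j)) = c i * cnj (c j)"
    if "n2 c \<noteq> 0" for c i j
  proof -
    have p: "n2 c > 0" using n0[of c] that by simp
    have "complex_of_real (n2 c) = of_real (sqrt (n2 c)) * of_real (sqrt (n2 c))"
      using p by (metis of_real_mult less_imp_le real_sqrt_mult_self abs_of_nonneg)
    moreover have "(of_real (sqrt (n2 c)) :: complex) \<noteq> 0" using p by simp
    ultimately show ?thesis unfolding f_def by (simp add: field_simps)
  qed
  have B: "\<rho> = (\<lambda>i j. \<Sum>(p, \<psi>) \<leftarrow> E. complex_of_real p * \<psi> i * cnj (\<psi> j))"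
  proof (intro ext)
    fix i j
    have "(\<Sum>(p, \<psi>) \<leftarrow> E. complex_of_real p * \<psi> i * cnj (\<psi> j))
        = (\<Sum>c \<leftarrow> filter (\<lambda>c. n2 c \<noteq> 0) cs. c i * cnj (c j))"
      unfolding E_def map_map o_def
      by (rule arg_cong[where f = sum_list], rule map_cong) (auto simp: trm)
    also have "\<dots> = (\<Sum>c \<leftarrow> cs. c i * cnj (c j))"
      by (rule sum_list_map_filter) (auto dest: n2_zero)
    finally show "\<rho> i j = (\<Sum>(p, \<psi>) \<leftarrow> E. complex_of_real p * \<psi> i * cnj (\<psi> j))"
      using cs by simp
  qed
  show ?thesis unfolding pure_decomposition_def using A B by blast
qed


lemma bf_add_mat: "bf (\<lambda>i j. A i j + B i j) x y = bf A x y + bf B x y"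
  unfolding bf_def by (simp add: algebra_simps sum.distrib)

lemma bf_rank1: "bf (\<lambda>i j. c * \<psi> i * cnj (\<psi> j)) \<phi> \<phi>
   = c * of_real ((cmod (\<Sum>i\<in>UNIV. cnj (\<phi> i) * \<psi> i))\<^sup>2)"
proof -
  define z where "z = (\<Sum>i\<in>UNIV. cnj (\<phi> i) * \<psi> i)"
  have "bf (\<lambda>i j. c * \<psi> i * cnj (\<psi> j)) \<phi> \<phi> = c * ((\<Sum>i\<in>UNIV. cnj (\<phi> i) * \<psi> i) * (\<Sum>j\<in>UNIV. cnj (\<psi> j) * \<phi> j))"
    unfolding bf_def by (simp add: sum_product sum_distrib_left algebra_simps)
  also have "(\<Sum>j\<in>UNIV. cnj (\<psi> j) * \<phi> j) = cnj z"
    unfolding z_def cnj_sum by (simp add: mult.commute)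
  finally show ?thesis unfolding z_def[symmetric] complex_norm_square by simp
qed

lemma bf_decomp:
  fixes E :: "(real \<times> ('n::finite \<Rightarrow> complex)) list"
  shows "bf (\<lambda>i j. \<Sum>(p, \<psi>) \<leftarrow> E. complex_of_real p * \<psi> i * cnj (\<psi> j)) \<phi> \<phi>
    = complex_of_real (\<Sum>(p, \<psi>) \<leftarrow> E. p * (cmod (\<Sum>i\<in>UNIV. cnj (\<phi> i) * \<psi> i))\<^sup>2)"
proof (induction E)
  case Nil
  then show ?case by (simp add: bf_def)
next
  case (Cons a E)
  obtain p \<psi> where a: "a = (p, \<psi>)" by (cases a)
  have "bf (\<lambda>i j. \<Sum>(p, \<psi>) \<leftarrow> a # E. complex_of_real p * \<psi> i * cnj (\<psi> j)) \<phi> \<phi>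
     = bf (\<lambda>i j. complex_of_real p * \<psi> i * cnj (\<psi> j)) \<phi> \<phi>
       + bf (\<lambda>i j. \<Sum>(p, \<psi>) \<leftarrow> E. complex_of_real p * \<psi> i * cnj (\<psi> j)) \<phi> \<phi>"
    unfolding a by (simp add: bf_add_mat)
  then show ?case using Cons.IH a by (simp add: bf_rank1)
qed

lemma trace_decomp:
  fixes E :: "(real \<times> ('n::finite \<Rightarrow> complex)) list"
  shows "(\<Sum>i\<in>UNIV. \<Sum>(p, \<psi>) \<leftarrow> E. complex_of_real p * \<psi> i * cnj (\<psi> i))
    = complex_of_real (\<Sum>(p, \<psi>) \<leftarrow> E. p * (\<Sum>i\<in>UNIV. (cmod (\<psi> i))\<^sup>2))"
proof (induction E)
  case Nil
  then show ?case by simp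
next
  case (Cons a E)
  obtain p \<psi> where a: "a = (p, \<psi>)" by (cases a)
  have "(\<Sum>i\<in>UNIV. complex_of_real p * \<psi> i * cnj (\<psi> i)) = complex_of_real (p * (\<Sum>i\<in>UNIV. (cmod (\<psi> i))\<^sup>2))"
    by (simp add: sum_distrib_left mult.assoc flip: complex_norm_square)
  then show ?case using Cons.IH a by (simp add: sum.distrib)
qed

lemma overlap_bound:
  fixes \<psi> :: "'n::finite \<Rightarrow> complex"
  assumes norm1: "(\<Sum>i\<in>UNIV. (cmod (\<psi> i))\<^sup>2) = 1" and rk: "coherence_rank \<psi> \<le> N"
  shows "(cmod (\<Sum>i\<in>UNIV. cnj (max_coherent_state \<theta> i) * \<psi> i))\<^sup>2 \<le> real N / real CARD('n)"
proof -
  define d where "d = real CARD('n)"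
  have dp: "d > 0" unfolding d_def by simp
  define S where "S = {i. \<psi> i \<noteq> 0}"
  have cphi: "cmod (max_coherent_state \<theta> i) = 1 / sqrt d" for i
    unfolding max_coherent_state_def d_def by (simp add: norm_divide norm_exp_i_times)
  have "cmod (\<Sum>i\<in>UNIV. cnj (max_coherent_state \<theta> i) * \<psi> i)
      \<le> (\<Sum>i\<in>UNIV. cmod (cnj (max_coherent_state \<theta> i) * \<psi> i))"
    by (rule norm_sum)
  also have "\<dots> = (\<Sum>i\<in>UNIV. cmod (\<psi> i)) / sqrt d"
    by (simp add: norm_mult cphi sum_divide_distrib)
  also have "(\<Sum>i\<in>UNIV. cmod (\<psi> i)) = (\<Sum>i\<in>S. 1 * cmod (\<psi> i))"
    unfolding mult_1 by (rule sum.mono_neutral_right) (auto simp: S_def)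
  finally have le1: "cmod (\<Sum>i\<in>UNIV. cnj (max_coherent_state \<theta> i) * \<psi> i) \<le> (\<Sum>i\<in>S. 1 * cmod (\<psi> i)) / sqrt d" .
  have "(\<Sum>i\<in>S. 1 * cmod (\<psi> i))\<^sup>2 \<le> (\<Sum>i\<in>S. 1\<^sup>2) * (\<Sum>i\<in>S. (cmod (\<psi> i))\<^sup>2)"
    by (rule Cauchy_Schwarz_ineq_sum)
  also have "(\<Sum>i\<in>S. (cmod (\<psi> i))\<^sup>2) = 1"
    unfolding norm1[symmetric] by (rule sum.mono_neutral_left) (auto simp: S_def)
  also have "(\<Sum>i\<in>S. (1::real)\<^sup>2) = real (card S)" by simp
  also have "card S \<le> N" using rk unfolding coherence_rank_def S_def .
  finally have le2: "(\<Sum>i\<in>S. 1 * cmod (\<psi> i))\<^sup>2 \<le> real N" by simp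
  have "(cmod (\<Sum>i\<in>UNIV. cnj (max_coherent_state \<theta> i) * \<psi> i))\<^sup>2 \<le> ((\<Sum>i\<in>S. 1 * cmod (\<psi> i)) / sqrt d)\<^sup>2"
    by (rule power_mono[OF le1]) simp
  also have "\<dots> = (\<Sum>i\<in>S. 1 * cmod (\<psi> i))\<^sup>2 / d"
    using dp by (simp add: power_divide)
  also have "\<dots> \<le> real N / d" using le2 dp by (simp add: divide_right_mono)
  finally show ?thesis unfolding d_def .
qed


lemma sum_list_mult_const_r:
  fixes E :: "(real \<times> 'b) list"
  shows "(\<Sum>(p, \<psi>)\<leftarrow>E. p * c) = (\<Sum>(p, \<psi>)\<leftarrow>E. p) * (c::real)"
  by (induction E) (auto simp: algebra_simps)

theorem mainTheorem5:
  fixes \<rho> :: "'n::finite \<Rightarrow> 'n \<Rightarrow> complex"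
  assumes "density_op \<rho>"
  shows "coherence_fraction \<rho> \<le> real (coherence_number \<rho>) / real CARD('n)"
proof -
  have herm: "\<forall>i j. \<rho> j i = cnj (\<rho> i j)" and pos: "\<forall>v. 0 \<le> Re (bf \<rho> v v)"
    and tr: "(\<Sum>i\<in>UNIV. \<rho> i i) = 1"
    using assms unfolding density_op_def bf_def by blast+
  define M where "M = {Max (insert 0 ((\<lambda>(p, \<psi>). coherence_rank \<psi>) ` set E)) | E. pure_decomposition \<rho> E}"
  have "M \<noteq> {}" using exists_decomp[OF herm pos] unfolding M_def by blast
  then have "coherence_number \<rho> \<in> M" unfolding coherence_number_def M_def[symmetric]
    by (rule Inf_nat_def1)
  then obtain E where E: "pure_decomposition \<rho> E"
    and N: "coherence_number \<rho> = Max (insert 0 ((\<lambda>(p, \<psi>). coherence_rank \<psi>) ` set E))"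
    unfolding M_def by blast
  define N where "N = coherence_number \<rho>"
  have Enorm: "\<forall>(p, \<psi>) \<in> set E. p > 0 \<and> (\<Sum>i\<in>UNIV. (cmod (\<psi> i))\<^sup>2) = 1"
    and rho: "\<rho> = (\<lambda>i j. \<Sum>(p, \<psi>) \<leftarrow> E. complex_of_real p * \<psi> i * cnj (\<psi> j))"
    using E unfolding pure_decomposition_def by blast+
  have rk: "coherence_rank \<psi> \<le> N" if "(p, \<psi>) \<in> set E" for p \<psi>
  proof -
    have "coherence_rank \<psi> \<in> insert 0 ((\<lambda>(p, \<psi>). coherence_rank \<psi>) ` set E)"
      using that by force
    then show ?thesis unfolding N_def N by (intro Max_ge) auto
  qed
  have sump: "(\<Sum>(p, \<psi>) \<leftarrow> E. p) = 1"
  proof -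
    have "(\<Sum>(p, \<psi>) \<leftarrow> E. p * (\<Sum>i\<in>UNIV. (cmod (\<psi> i))\<^sup>2)) = (\<Sum>(p, \<psi>) \<leftarrow> E. p)"
      by (rule arg_cong[where f = sum_list], rule map_cong) (use Enorm in auto)
    moreover have "complex_of_real (\<Sum>(p, \<psi>) \<leftarrow> E. p * (\<Sum>i\<in>UNIV. (cmod (\<psi> i))\<^sup>2)) = 1"
      using tr trace_decomp[of E] rho by simp
    ultimately show ?thesis by simp
  qed
  have dp: "real CARD('n) > 0" by simp
  show ?thesis
    unfolding coherence_fraction_def N_def[symmetric]
  proof (rule cSUP_least)
    show "(UNIV :: ('n \<Rightarrow> real) set) \<noteq> {}" by simp
  next
    fix \<theta> :: "'n \<Rightarrow> real"
    define \<phi> where "\<phi> = max_coherent_state \<theta>"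
    have "Re (\<Sum>i\<in>UNIV. \<Sum>j\<in>UNIV. cnj (max_coherent_state \<theta> i) * \<rho> i j * max_coherent_state \<theta> j)
        = Re (bf \<rho> \<phi> \<phi>)" unfolding bf_def \<phi>_def ..
    also have "\<dots> = (\<Sum>(p, \<psi>) \<leftarrow> E. p * (cmod (\<Sum>i\<in>UNIV. cnj (\<phi> i) * \<psi> i))\<^sup>2)"
      by (subst rho) (simp only: bf_decomp Re_complex_of_real)
    also have "\<dots> \<le> (\<Sum>(p, \<psi>) \<leftarrow> E. p * (real N / real CARD('n)))"
    proof (rule sum_list_mono)
      fix x assume x: "x \<in> set E"
      obtain p \<psi> where xp: "x = (p, \<psi>)" by (cases x)
      have p0: "p > 0" and n1: "(\<Sum>i\<in>UNIV. (cmod (\<psi> i))\<^sup>2) = 1" using Enorm x xp by auto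
      have "(cmod (\<Sum>i\<in>UNIV. cnj (\<phi> i) * \<psi> i))\<^sup>2 \<le> real N / real CARD('n)"
        unfolding \<phi>_def by (rule overlap_bound[OF n1 rk[OF x[unfolded xp]]])
      then show "(case x of (p, \<psi>) \<Rightarrow> p * (cmod (\<Sum>i\<in>UNIV. cnj (\<phi> i) * \<psi> i))\<^sup>2)
          \<le> (case x of (p, \<psi>) \<Rightarrow> p * (real N / real CARD('n)))"
        using p0 xp by (simp del: times_divide_eq_right add: mult_left_mono)
    qed
    also have "(\<Sum>(p, \<psi>) \<leftarrow> E. p * (real N / real CARD('n))) = (\<Sum>(p, \<psi>) \<leftarrow> E. p) * (real N / real CARD('n))"
      by (rule sum_list_mult_const_r)
    also have "\<dots> = real N / real CARD('n)" using sump by simp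
    finally show "Re (\<Sum>i\<in>UNIV. \<Sum>j\<in>UNIV. cnj (max_coherent_state \<theta> i) * \<rho> i j * max_coherent_state \<theta> j)
        \<le> real N / real CARD('n)" .
  qed
qed

end
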